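(* Let $K \ge 1$ be the number of groups, let $c_1,\dots,c_K>0$ be per-sample costs, let $B>0$ be a budget, and let $s>0$ be a step size. For each group $k$, let $M_k:\mathbb{R}_+^K\to\mathbb{R}$ be a (differentiable) learning curve that is concave and increasing, and let the utility of an allocation $\vec n=(n_1,\dots,n_K)\in\mathbb{R}_+^K$ be linear in the group-level performances: $U(\vec n)=\sum_{k=1}^K a_k M_k(\vec n)$ with weights $a_k\ge 0$. Suppose the partial derivatives of the learning curves have no cross-group effects, i.e. for every $j\in\{1,\dots,K\}$ and all $\vec p,\vec q\in\mathbb{R}_+^K$ with $p_j=q_j$, $$\frac{\partial M_k(\vec p)}{\partial n_j}=\frac{\partial M_k(\vec q)}{\partial n_j}\quad\text{for all }1\le k\le K.$$ Consider the greedy algorithm: initialize $\vec n=0$; while $\sum_{k=1}^K c_k n_k< B$, choose $$i^*\in\operatorname{argmax}_{1\le i\le K}\ \sum_{k=1}^K a_k M_k\!\left(\vec n+\tfrac{s}{c_i}\mathbf{1}_i\right),$$ where $\mathbf{1}_i$ is the $i$-th standard basis vector, and update $n_{i^*}\leftarrow n_{i^*}+\tfrac{s}{c_{i^*}}$. Then the allocation produced by the greedy algorithm maximizes $U$ over all feasible allocations $\vec n$ (i.e. those with $\sum_{k=1}^K c_k n_k\le B$) in which each $n_k$ is a nonnegative integer multiple of $\tfrac{s}{c_k}$.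
   Context: A model builder allocates a data-collection budget $B$ across $K$ groups; an allocation $\vec n\in\mathbb{R}_+^K$ specifies how many training samples are collected from each group, and collecting one sample from group $k$ costs $c_k$, so the budget constraint is $\sum_k c_k n_k\le B$. The learning curve $M_k(\vec n)$ is the expected model performance on group $k$ when the model is trained on a dataset with allocation $\vec n$. Each step of the greedy algorithm spends $s$ units of budget, buying $s/c_i$ samples from the chosen group $i$. *)

theory Defs
  imports "HOL-Analysis.Analysis"
begin

text \<open>The nonnegative orthant R_+^K, with K = CARD('n).\<close>
definition nonneg_orthant :: "(real ^ 'n) set" where
  "nonneg_orthant = {x. \<forall>i. 0 \<le> x $ i}"

text \<open>Partial derivative of f in direction j at p, for f defined on the nonnegative orthant
  (one-sided at the boundary: derivative within the orthant).\<close>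
definition partial_deriv :: "(real ^ 'n \<Rightarrow> real) \<Rightarrow> 'n \<Rightarrow> real ^ 'n \<Rightarrow> real" where
  "partial_deriv f j p = frechet_derivative f (at p within nonneg_orthant) (axis j 1)"

definition alloc_cost :: "('n::finite \<Rightarrow> real) \<Rightarrow> real ^ 'n \<Rightarrow> real" where
  "alloc_cost c n = (\<Sum>k\<in>UNIV. c k * n $ k)"

definition utility :: "('n::finite \<Rightarrow> real) \<Rightarrow> ('n \<Rightarrow> real ^ 'n \<Rightarrow> real) \<Rightarrow> real ^ 'n \<Rightarrow> real" where
  "utility a M n = (\<Sum>k\<in>UNIV. a k * M k n)"

definition greedy_step :: "real \<Rightarrow> ('n \<Rightarrow> real) \<Rightarrow> real ^ 'n \<Rightarrow> 'n \<Rightarrow> real ^ 'n" where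
  "greedy_step s c n i = n + (s / c i) *\<^sub>R axis i 1"

end

theory Submission
  imports Defs
begin

lemma line_in_orth:
  fixes x :: "real ^ 'n"
  assumes "x \<in> nonneg_orthant" "t \<ge> 0"
  shows "x + t *\<^sub>R axis j 1 \<in> nonneg_orthant"
  using assms by (auto simp: nonneg_orthant_def axis_def)

lemma indep_lemma:
  fixes f :: "real ^ 'n \<Rightarrow> real"
  assumes diff: "\<And>p. p \<in> nonneg_orthant \<Longrightarrow> f differentiable (at p within nonneg_orthant)"
    and nc: "\<And>p q. p \<in> nonneg_orthant \<Longrightarrow> q \<in> nonneg_orthant \<Longrightarrow>
                   p $ j = q $ j \<Longrightarrow> partial_deriv f j p = partial_deriv f j q"
    and x: "x \<in> nonneg_orthant" and y: "y \<in> nonneg_orthant" and xy: "x $ j = y $ j"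
    and t: "t \<ge> 0"
  shows "f (x + t *\<^sub>R axis j 1) - f x = f (y + t *\<^sub>R axis j 1) - f y"
proof -
  let ?e = "axis j 1 :: real ^ 'n"
  let ?S = "nonneg_orthant :: (real ^ 'n) set"
  let ?D = "\<lambda>p. frechet_derivative f (at p within ?S)"
  have fd: "\<And>p. p \<in> ?S \<Longrightarrow> (f has_derivative ?D p) (at p within ?S)"
    using diff frechet_derivative_works by blast
  have lin: "\<And>p h. p \<in> ?S \<Longrightarrow> ?D p (h *\<^sub>R ?e) = h * ?D p ?e"
  proof -
    fix p h assume "p \<in> ?S"
    then have "linear (?D p)" using fd has_derivative_linear by blast
    then show "?D p (h *\<^sub>R ?e) = h * ?D p ?e" using linear_scale by fastforce
  qed
  have comp: "((\<lambda>\<tau>. f (z + \<tau> *\<^sub>R ?e)) has_derivative (\<lambda>h. ?D (z + \<tau> *\<^sub>R ?e) (h *\<^sub>R ?e))) (at \<tau> within {0..})"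
    if "z \<in> ?S" "\<tau> \<ge> 0" for z \<tau>
  proof (rule has_derivative_in_compose2[where t = ?S and g = f and g' = ?D])
    show "\<And>x. x \<in> ?S \<Longrightarrow> (f has_derivative ?D x) (at x within ?S)" using fd .
    show "(\<lambda>\<tau>. z + \<tau> *\<^sub>R ?e) ` {0..} \<subseteq> ?S" using that line_in_orth by auto
    show "\<tau> \<in> {0..}" using that by simp
    show "((\<lambda>\<tau>. z + \<tau> *\<^sub>R ?e) has_derivative (\<lambda>h. h *\<^sub>R ?e)) (at \<tau> within {0..})"
      by (auto intro!: derivative_eq_intros)
  qed
  have "\<exists>C. \<forall>\<tau>\<in>{0::real..}. f (x + \<tau> *\<^sub>R ?e) - f (y + \<tau> *\<^sub>R ?e) = C"
  proof (rule has_derivative_zero_constant)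
    show "convex {0::real..}" by (simp add: convex_real_interval)
    fix \<tau> :: real assume "\<tau> \<in> {0..}"
    then have tp: "\<tau> \<ge> 0" by simp
    have px: "x + \<tau> *\<^sub>R ?e \<in> ?S" and py: "y + \<tau> *\<^sub>R ?e \<in> ?S" using tp x y line_in_orth by auto
    have eq: "?D (x + \<tau> *\<^sub>R ?e) ?e = ?D (y + \<tau> *\<^sub>R ?e) ?e"
      using nc[OF px py] xy unfolding partial_deriv_def by (simp add: axis_def)
    have "((\<lambda>\<tau>. f (x + \<tau> *\<^sub>R ?e) - f (y + \<tau> *\<^sub>R ?e)) has_derivative
       (\<lambda>h. ?D (x + \<tau> *\<^sub>R ?e) (h *\<^sub>R ?e) - ?D (y + \<tau> *\<^sub>R ?e) (h *\<^sub>R ?e))) (at \<tau> within {0..})"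
      by (rule has_derivative_diff[OF comp[OF x tp] comp[OF y tp]])
    moreover have "(\<lambda>h. ?D (x + \<tau> *\<^sub>R ?e) (h *\<^sub>R ?e) - ?D (y + \<tau> *\<^sub>R ?e) (h *\<^sub>R ?e)) = (\<lambda>h. 0)"
      using lin[OF px] lin[OF py] eq by auto
    ultimately show "((\<lambda>\<tau>. f (x + \<tau> *\<^sub>R ?e) - f (y + \<tau> *\<^sub>R ?e)) has_derivative (\<lambda>h. 0)) (at \<tau> within {0..})"
      by simp
  qed
  then obtain C where C: "\<And>\<tau>. \<tau> \<ge> 0 \<Longrightarrow> f (x + \<tau> *\<^sub>R ?e) - f (y + \<tau> *\<^sub>R ?e) = C" by auto
  from C[OF t] C[of 0] show ?thesis by simp
qed

lemma concave_line:
  fixes f :: "real ^ 'n \<Rightarrow> real"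
  assumes cf: "concave_on nonneg_orthant f" and x: "x \<in> nonneg_orthant"
    and d: "d \<ge> 0" and h: "h \<ge> 0"
  shows "f (x + (d + h) *\<^sub>R axis j 1) - f (x + d *\<^sub>R axis j 1) \<le> f (x + h *\<^sub>R axis j 1) - f x"
proof (cases "d + h = 0")
  case True then have "d = 0" "h = 0" using d h by auto
  then show ?thesis by simp
next
  case False
  let ?v = "axis j 1 :: real ^ 'n"
  define l where "l = d / (d + h)"
  have dh: "d + h > 0" using d h False by auto
  have l0: "l \<ge> 0" "l \<le> 1" using d h dh by (auto simp: l_def)
  have l1: "1 - l = h / (d + h)" using dh by (simp add: l_def field_simps)
  have y: "x + (d + h) *\<^sub>R ?v \<in> nonneg_orthant" using x dh by (intro line_in_orth) auto
  have ld: "l * (d + h) = d" using dh by (simp add: l_def)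
  have ld2: "(1 - l) * (d + h) = h" using dh by (simp add: l1)
  have e1: "(1 - l) *\<^sub>R x + l *\<^sub>R (x + (d + h) *\<^sub>R ?v) = x + d *\<^sub>R ?v"
  proof -
    have "(1 - l) *\<^sub>R x + l *\<^sub>R (x + (d + h) *\<^sub>R ?v) = x + (l * (d + h)) *\<^sub>R ?v"
      by (simp add: algebra_simps)
    then show ?thesis using ld by simp
  qed
  have e2: "(1 - (1 - l)) *\<^sub>R x + (1 - l) *\<^sub>R (x + (d + h) *\<^sub>R ?v) = x + h *\<^sub>R ?v"
  proof -
    have "(1 - (1 - l)) *\<^sub>R x + (1 - l) *\<^sub>R (x + (d + h) *\<^sub>R ?v) = x + ((1 - l) * (d + h)) *\<^sub>R ?v"
      by (simp add: algebra_simps)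
    then show ?thesis using ld2 by simp
  qed
  have A: "f (x + d *\<^sub>R ?v) \<ge> (1 - l) * f x + l * f (x + (d + h) *\<^sub>R ?v)"
    using concave_onD[OF cf, of l x "x + (d + h) *\<^sub>R ?v"] l0 x y e1 by simp
  have B: "f (x + h *\<^sub>R ?v) \<ge> (1 - (1 - l)) * f x + (1 - l) * f (x + (d + h) *\<^sub>R ?v)"
    using concave_onD[OF cf, of "1 - l" x "x + (d + h) *\<^sub>R ?v"] l0 x y e2 by simp
  from A B show ?thesis by (simp add: algebra_simps)
qed


lemma cost_step:
  fixes n :: "real ^ 'n::finite"
  shows "alloc_cost c (n + t *\<^sub>R axis i 1) = alloc_cost c n + c i * t"
proof -
  have "alloc_cost c (n + t *\<^sub>R axis i 1) = (\<Sum>k\<in>UNIV. c k * n $ k + (if k = i then c k * t else 0))"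
    unfolding alloc_cost_def by (rule sum.cong) (auto simp: axis_def algebra_simps)
  also have "\<dots> = alloc_cost c n + c i * t"
    unfolding alloc_cost_def by (simp add: sum.distrib)
  finally show ?thesis .
qed

lemma grid_cost:
  fixes n :: "real ^ 'n::finite"
  assumes cp: "\<And>k. c k > 0" and g: "\<forall>k. \<exists>m::nat. n $ k = real m * (s / c k)"
  shows "\<exists>N::nat. alloc_cost c n = s * real N"
proof -
  from g obtain mf where mf: "\<And>k. n $ k = real (mf k) * (s / c k)" by metis
  have "alloc_cost c n = (\<Sum>k\<in>UNIV. s * real (mf k))"
    unfolding alloc_cost_def using cp by (intro sum.cong) (auto simp: mf field_simps less_imp_neq[symmetric])
  also have "\<dots> = s * real (\<Sum>k\<in>UNIV. mf k)" by (simp add: sum_distrib_left)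
  finally show ?thesis by blast
qed

lemma grid_S:
  fixes n :: "real ^ 'n::finite"
  assumes cp: "\<And>k. c k > 0" and sp: "s > 0" and g: "\<forall>k. \<exists>m::nat. n $ k = real m * (s / c k)"
  shows "n \<in> nonneg_orthant"
  unfolding nonneg_orthant_def
proof (safe)
  fix k from g obtain m :: nat where "n $ k = real m * (s / c k)" by blast
  then show "0 \<le> n $ k" using cp[of k] sp by simp
qed

theorem theorem4p1:
  fixes c :: "'n::finite \<Rightarrow> real" and a :: "'n \<Rightarrow> real"
    and B s :: real
    and M :: "'n \<Rightarrow> real ^ 'n \<Rightarrow> real"
    and ns :: "nat \<Rightarrow> real ^ 'n" and T :: nat
  assumes c_pos: "\<And>k. c k > 0"
    and B_pos: "B > 0" and s_pos: "s > 0"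
    and a_nonneg: "\<And>k. a k \<ge> 0"
    and M_diff: "\<And>k p. p \<in> nonneg_orthant \<Longrightarrow> M k differentiable (at p within nonneg_orthant)"
    and M_concave: "\<And>k. concave_on nonneg_orthant (M k)"
    and M_incr: "\<And>k p q. p \<in> nonneg_orthant \<Longrightarrow> q \<in> nonneg_orthant \<Longrightarrow>
                   (\<forall>i. p $ i \<le> q $ i) \<Longrightarrow> M k p \<le> M k q"
    and no_cross: "\<And>j k p q. p \<in> nonneg_orthant \<Longrightarrow> q \<in> nonneg_orthant \<Longrightarrow>
                   p $ j = q $ j \<Longrightarrow> partial_deriv (M k) j p = partial_deriv (M k) j q"
    and greedy_init: "ns 0 = 0"
    and greedy_run: "\<And>t. t < T \<Longrightarrow> alloc_cost c (ns t) < B \<and>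
                   (\<exists>i. (\<forall>i'. utility a M (greedy_step s c (ns t) i')
                                \<le> utility a M (greedy_step s c (ns t) i))
                        \<and> ns (Suc t) = greedy_step s c (ns t) i)"
    and greedy_stop: "alloc_cost c (ns T) \<ge> B"
  shows "\<forall>n. (\<forall>k. \<exists>m::nat. n $ k = real m * (s / c k)) \<and> alloc_cost c n \<le> B
             \<longrightarrow> utility a M n \<le> utility a M (ns T)"
proof -
  let ?S = "nonneg_orthant :: (real ^ 'n) set"
  let ?U = "utility a M"
  define grid where "grid n \<longleftrightarrow> (\<forall>k. \<exists>m::nat. n $ k = real m * (s / c k))" for n :: "real ^ 'n"
  have gS: "grid n \<Longrightarrow> n \<in> ?S" for n unfolding grid_def by (rule grid_S[of c s n, OF c_pos s_pos])
  have U_indep: "?U (x + t *\<^sub>R axis j 1) - ?U x = ?U (y + t *\<^sub>R axis j 1) - ?U y"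
    if "x \<in> ?S" "y \<in> ?S" "x $ j = y $ j" "t \<ge> 0" for x y t j
  proof -
    have "\<And>k. M k (x + t *\<^sub>R axis j 1) - M k x = M k (y + t *\<^sub>R axis j 1) - M k y"
      by (rule indep_lemma[OF M_diff no_cross that]) auto
    then show ?thesis unfolding utility_def
      by (simp add: sum_subtractf[symmetric] right_diff_distrib[symmetric])
  qed
  have U_conc: "?U (x + (d + h) *\<^sub>R axis j 1) - ?U (x + d *\<^sub>R axis j 1) \<le> ?U (x + h *\<^sub>R axis j 1) - ?U x"
    if "x \<in> ?S" "d \<ge> 0" "h \<ge> 0" for x d h j
  proof -
    have "\<And>k. a k * (M k (x + (d + h) *\<^sub>R axis j 1) - M k (x + d *\<^sub>R axis j 1)) \<le> a k * (M k (x + h *\<^sub>R axis j 1) - M k x)"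
      by (rule mult_left_mono[OF concave_line[OF M_concave that] a_nonneg])
    then have "(\<Sum>k\<in>UNIV. a k * (M k (x + (d + h) *\<^sub>R axis j 1) - M k (x + d *\<^sub>R axis j 1))) \<le> (\<Sum>k\<in>UNIV. a k * (M k (x + h *\<^sub>R axis j 1) - M k x))"
      by (rule sum_mono)
    then show ?thesis unfolding utility_def
      by (simp add: sum_subtractf[symmetric] right_diff_distrib)
  qed
  have inv: "t \<le> T \<Longrightarrow> grid (ns t) \<and> alloc_cost c (ns t) = real t * s" for t
  proof (induction t)
    case 0
    then show ?case by (auto simp: grid_def greedy_init alloc_cost_def)
  next
    case (Suc t)
    then have IH: "grid (ns t)" "alloc_cost c (ns t) = real t * s" by auto
    from greedy_run[of t] Suc.prems obtain i where i: "ns (Suc t) = greedy_step s c (ns t) i" by auto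
    have "grid (ns (Suc t))" unfolding grid_def
    proof
      fix k
      from IH(1) obtain m :: nat where m: "ns t $ k = real m * (s / c k)" unfolding grid_def by blast
      show "\<exists>m. ns (Suc t) $ k = real m * (s / c k)"
      proof (cases "k = i")
        case True
        then have "ns (Suc t) $ k = real (Suc m) * (s / c k)"
          using i m by (simp add: greedy_step_def axis_def algebra_simps add_divide_distrib)
        then show ?thesis by blast
      next
        case False
        then have "ns (Suc t) $ k = real m * (s / c k)"
          using i m by (simp add: greedy_step_def axis_def)
        then show ?thesis by blast
      qed
    qed
    moreover have "alloc_cost c (ns (Suc t)) = real (Suc t) * s"
      using i IH(2) c_pos[of i] by (simp add: greedy_step_def cost_step algebra_simps)
    ultimately show ?case by blast
  qed
  have main: "t \<le> T \<Longrightarrow> \<forall>n. grid n \<and> alloc_cost c n = real t * s \<longrightarrow> ?U n \<le> ?U (ns t)" for t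
  proof (induction t)
    case 0
    show ?case
    proof (intro allI impI)
      fix n :: "real ^ 'n" assume H: "grid n \<and> alloc_cost c n = real 0 * s"
      have nn: "\<And>k. k \<in> UNIV \<Longrightarrow> 0 \<le> c k * n $ k" using gS[of n] H c_pos
        by (auto simp: nonneg_orthant_def less_imp_le)
      have "\<forall>k\<in>UNIV. c k * n $ k = 0"
      proof -
        have "(\<Sum>k\<in>UNIV. c k * n $ k) = 0" using H by (simp add: alloc_cost_def)
        then show ?thesis using sum_nonneg_eq_0_iff[of UNIV "\<lambda>k. c k * n $ k"] nn by simp
      qed
      then have "n = 0" using c_pos by (auto simp: vec_eq_iff less_imp_neq[symmetric])
      then show "?U n \<le> ?U (ns 0)" by (simp add: greedy_init)
    qed
  next
    case (Suc t)
    have tT: "t < T" using Suc.prems by simp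
    have IH: "\<forall>n. grid n \<and> alloc_cost c n = real t * s \<longrightarrow> ?U n \<le> ?U (ns t)" using Suc tT by simp
    have It: "grid (ns t)" "alloc_cost c (ns t) = real t * s" using inv tT by auto
    from greedy_run[OF tT] obtain i where
      imax: "\<And>i'. ?U (greedy_step s c (ns t) i') \<le> ?U (greedy_step s c (ns t) i)"
      and i: "ns (Suc t) = greedy_step s c (ns t) i" by auto
    show ?case
    proof (intro allI impI)
      fix n :: "real ^ 'n" assume H: "grid n \<and> alloc_cost c n = real (Suc t) * s"
      have "\<exists>j. n $ j > ns t $ j"
      proof (rule ccontr)
        assume "\<not> ?thesis"
        then have "\<And>j. c j * n $ j \<le> c j * ns t $ j" using c_pos by (simp add: mult_left_mono less_imp_le not_less)
        then have "alloc_cost c n \<le> alloc_cost c (ns t)" unfolding alloc_cost_def by (rule sum_mono)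
        then show False using H It(2) s_pos by (simp add: algebra_simps)
      qed
      then obtain j where j: "n $ j > ns t $ j" by blast
      let ?e = "axis j 1 :: real ^ 'n"
      let ?h = "s / c j"
      have hp: "?h > 0" using s_pos c_pos[of j] by simp
      obtain mj :: nat where mj: "n $ j = real mj * ?h" using H unfolding grid_def by blast
      obtain g :: nat where g: "ns t $ j = real g * ?h" using It(1) unfolding grid_def by blast
      have "real g * ?h < real mj * ?h" using j mj g by simp
      then have "real g < real mj" using hp by (simp only: mult_less_cancel_right)
      then have gm: "g + 1 \<le> mj" by linarith
      define n' where "n' = n - ?h *\<^sub>R ?e"
      have nn': "n = n' + ?h *\<^sub>R ?e" by (simp add: n'_def)
      have n'j: "n' $ j = real (mj - 1) * ?h" using gm mj by (simp add: n'_def axis_def of_nat_diff algebra_simps diff_divide_distrib)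
      have "grid n'" unfolding grid_def
      proof
        fix k
        show "\<exists>m. n' $ k = real m * (s / c k)"
        proof (cases "k = j")
          case True then show ?thesis using n'j by blast
        next
          case False
          then show ?thesis using H unfolding grid_def n'_def by (simp add: axis_def)
        qed
      qed
      moreover have "alloc_cost c n' = real t * s"
        using H c_pos[of j] unfolding nn' cost_step by (simp add: algebra_simps)
      ultimately have Un': "?U n' \<le> ?U (ns t)" using IH by blast
      define d where "d = n' $ j - ns t $ j"
      have "real g \<le> real (mj - 1)" using gm by simp
      then have "real g * ?h \<le> real (mj - 1) * ?h" using hp by (intro mult_right_mono) auto
      then have d0: "d \<ge> 0" unfolding d_def n'j g by simp
      have nsS: "ns t \<in> ?S" using gS It(1) by blast
      have zS: "ns t + d *\<^sub>R ?e \<in> ?S" by (rule line_in_orth[OF nsS d0])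
      have zj: "(ns t + d *\<^sub>R ?e) $ j = n' $ j" by (simp add: d_def axis_def)
      have A: "?U n - ?U n' = ?U ((ns t + d *\<^sub>R ?e) + ?h *\<^sub>R ?e) - ?U (ns t + d *\<^sub>R ?e)"
        unfolding nn' using U_indep[OF gS[OF \<open>grid n'\<close>] zS zj[symmetric], of ?h] hp by simp
      have eq: "(ns t + d *\<^sub>R ?e) + ?h *\<^sub>R ?e = ns t + (d + ?h) *\<^sub>R ?e" by (simp add: algebra_simps)
      have B: "?U n - ?U n' \<le> ?U (ns t + ?h *\<^sub>R ?e) - ?U (ns t)"
        using A[unfolded eq] U_conc[OF nsS d0, of ?h j] hp by linarith
      have C: "?U (ns t + ?h *\<^sub>R ?e) \<le> ?U (ns (Suc t))"
        using imax[of j] i by (simp add: greedy_step_def)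
      show "?U n \<le> ?U (ns (Suc t))" using Un' B C by simp
    qed
  qed
  show ?thesis
  proof (intro allI impI)
    fix n :: "real ^ 'n"
    assume H: "(\<forall>k. \<exists>m::nat. n $ k = real m * (s / c k)) \<and> alloc_cost c n \<le> B"
    then have gn: "grid n" unfolding grid_def by blast
    obtain N :: nat where N: "alloc_cost c n = s * real N" using grid_cost[of c n s, OF c_pos] H by blast
    have IT: "grid (ns T)" "alloc_cost c (ns T) = real T * s" using inv by auto
    have "s * real N \<le> s * real T" using N H IT(2) greedy_stop by (simp add: algebra_simps)
    then have NT: "N \<le> T" using s_pos by simp
    obtain k0 :: 'n where True by blast
    define n2 where "n2 = n + (real (T - N) * (s / c k0)) *\<^sub>R axis k0 1"
    have g2: "grid n2" unfolding grid_def
    proof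
      fix k
      from gn obtain m :: nat where m: "n $ k = real m * (s / c k)" unfolding grid_def by blast
      show "\<exists>m. n2 $ k = real m * (s / c k)"
      proof (cases "k = k0")
        case True
        then have "n2 $ k = real (m + (T - N)) * (s / c k)" using m by (simp add: n2_def axis_def algebra_simps)
        then show ?thesis by blast
      next
        case False
        then show ?thesis using m by (simp add: n2_def axis_def)
      qed
    qed
    have "alloc_cost c n2 = real T * s"
      using N NT c_pos[of k0] unfolding n2_def cost_step by (simp add: of_nat_diff algebra_simps)
    then have U2: "?U n2 \<le> ?U (ns T)" using main[of T] g2 by blast
    have "\<forall>i. n $ i \<le> n2 $ i" using c_pos[of k0] s_pos by (simp add: n2_def axis_def less_imp_le)
    then have "\<And>k. M k n \<le> M k n2" using M_incr gS gn g2 by blast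
    then have "?U n \<le> ?U n2" unfolding utility_def
      by (intro sum_mono mult_left_mono a_nonneg) auto
    then show "?U n \<le> ?U (ns T)" using U2 by simp
  qed
qed

end
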